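(* Let $\alpha$ be a badly approximable real number, i.e. $\inf_{q\ge1} q\,\|q\alpha\|>0$, and let $a$ be a real number with $0<a<1$. There exists a constant $C(\alpha)>0$ (depending on $\alpha$ and $a$) such that for every integer $q\ge2$, $$\sum_{x=q}^{q^3}\frac{1}{\|\alpha x\|\,x\,\bigl(\log(1/\|x\alpha\|)\bigr)^a\,(\log x)^{2-a}}\le C(\alpha).$$
   Context: For a real number $x$, $\|x\|$ denotes the distance from $x$ to the nearest integer. *)

theory Defs
  imports "HOL-Analysis.Analysis"
begin

definition dist_int :: "real \<Rightarrow> real" where
  "dist_int x = \<bar>x - of_int (round x)\<bar>"

definition badly_approximable :: "real \<Rightarrow> bool" where
  "badly_approximable \<alpha> \<longleftrightarrow> (INF q\<in>{1::nat..}. real q * dist_int (real q * \<alpha>)) > 0"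

end

theory Submission imports Defs begin
lemma sum_powr_neg:
  fixes a :: real assumes a: "0 < a" "a < 1"
  shows "(\<Sum>i=1..n. real i powr (-a)) \<le> real n powr (1-a) / (1-a)"
proof (induction n)
  case 0 then show ?case by simp
next
  case (Suc n)
  have step: "real (Suc n) powr (-a) \<le> (real (Suc n) powr (1-a) - real n powr (1-a)) / (1-a)"
  proof (cases "n = 0")
    case True then show ?thesis using a by simp
  next
    case False
    then have n: "real n > 0" by simp
    have y: "real n powr (1-a) * real (Suc n) powr a \<le> (1-a) * real n + a * real (Suc n)"
      using Youngs_inequality_0[of "1-a" a "real n" "real (Suc n)"] a n by simp
    have e1: "real (Suc n) powr (1-a) = real (Suc n) * real (Suc n) powr (-a)"
      by (simp add: powr_diff powr_minus divide_inverse)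
    have e2: "real (Suc n) powr a * real (Suc n) powr (-a) = 1"
      by (simp add: powr_minus)
    have "real n powr (1-a) = real n powr (1-a) * real (Suc n) powr a * real (Suc n) powr (-a)"
      using e2 by (simp add: mult.assoc)
    also have "\<dots> \<le> ((1-a) * real n + a * real (Suc n)) * real (Suc n) powr (-a)"
      by (rule mult_right_mono[OF y]) simp
    finally have "real n powr (1-a) \<le> (real n + a) * real (Suc n) powr (-a)"
      by (simp add: algebra_simps)
    then show ?thesis using a e1 by (simp add: field_simps)
  qed
  have "real n powr (1-a) / (1-a) + (real (Suc n) powr (1-a) - real n powr (1-a)) / (1-a)
     = real (Suc n) powr (1-a) / (1-a)" by (simp add: diff_divide_distrib)
  then show ?case using Suc step by simp
qed

lemma count_sep:
  fixes v :: "'b \<Rightarrow> real"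
  assumes fin: "finite S" and d: "\<delta> > 0" and l: "ell \<ge> 0"
    and sep: "\<And>x y. x \<in> S \<Longrightarrow> y \<in> S \<Longrightarrow> x \<noteq> y \<Longrightarrow> \<delta> \<le> \<bar>v x - v y\<bar>"
    and rng: "\<And>x. x \<in> S \<Longrightarrow> lo < v x \<and> v x \<le> lo + ell"
  shows "real (card S) \<le> ell / \<delta> + 1"
proof -
  define \<phi> where "\<phi> x = nat \<lfloor>(v x - lo) / \<delta>\<rfloor>" for x
  have inj: "inj_on \<phi> S"
  proof (rule inj_onI, rule ccontr)
    fix x y assume xy: "x \<in> S" "y \<in> S" "\<phi> x = \<phi> y" "x \<noteq> y"
    have px: "(v x - lo) / \<delta> > 0" "(v y - lo) / \<delta> > 0" using rng xy d by auto
    then have "\<lfloor>(v x - lo) / \<delta>\<rfloor> = \<lfloor>(v y - lo) / \<delta>\<rfloor>" using xy(3) unfolding \<phi>_def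
      by (simp add: eq_nat_nat_iff)
    then have "real_of_int \<lfloor>(v x - lo) / \<delta>\<rfloor> = real_of_int \<lfloor>(v y - lo) / \<delta>\<rfloor>" by simp
    then have "\<bar>(v x - lo) / \<delta> - (v y - lo) / \<delta>\<bar> < 1"
      using floor_correct[of "(v x - lo) / \<delta>"] floor_correct[of "(v y - lo) / \<delta>"] by linarith
    then have "\<bar>v x - v y\<bar> < \<delta>" using d by (simp add: diff_divide_distrib[symmetric] abs_divide)
    with sep[OF xy(1,2,4)] show False by simp
  qed
  have im: "\<phi> ` S \<subseteq> {0..nat \<lfloor>ell / \<delta>\<rfloor>}"
  proof
    fix z assume "z \<in> \<phi> ` S"
    then obtain x where x: "x \<in> S" "z = \<phi> x" by auto
    have "(v x - lo) / \<delta> \<le> ell / \<delta>" using rng[OF x(1)] d by (simp add: divide_right_mono)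
    then have "\<lfloor>(v x - lo) / \<delta>\<rfloor> \<le> \<lfloor>ell / \<delta>\<rfloor>" by (rule floor_mono)
    then show "z \<in> {0..nat \<lfloor>ell / \<delta>\<rfloor>}" unfolding x \<phi>_def by simp
  qed
  have "card S \<le> nat \<lfloor>ell / \<delta>\<rfloor> + 1"
  proof -
    have "card S = card (\<phi> ` S)" using card_image[OF inj] by simp
    also have "\<dots> \<le> card {0..nat \<lfloor>ell / \<delta>\<rfloor>}" by (rule card_mono) (simp_all add: im)
    finally show ?thesis by simp
  qed
  then have "real (card S) \<le> real (nat \<lfloor>ell / \<delta>\<rfloor>) + 1" by linarith
  also have "real (nat \<lfloor>ell / \<delta>\<rfloor>) \<le> ell / \<delta>" using l d by simp
  finally show ?thesis by simp
qed

lemma dist_int_nonneg: "dist_int z \<ge> 0" by (simp add: dist_int_def)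
lemma dist_int_le_half: "dist_int z \<le> 1/2"
  using of_int_round_abs_le[of z] by (simp add: dist_int_def abs_minus_commute)
lemma dist_int_le: "dist_int z \<le> \<bar>z - of_int m\<bar>"
  by (simp add: dist_int_def round_diff_minimal)

lemma ba_const:
  assumes "badly_approximable \<alpha>"
  shows "\<exists>c>0. \<forall>n::nat. n \<ge> 1 \<longrightarrow> c \<le> real n * dist_int (real n * \<alpha>)"
proof -
  define c where "c = (INF q\<in>{1::nat..}. real q * dist_int (real q * \<alpha>))"
  have c0: "c > 0" using assms unfolding badly_approximable_def c_def by simp
  have bdd: "bdd_below ((\<lambda>q. real q * dist_int (real q * \<alpha>)) ` {1::nat..})"
    by (rule bdd_belowI[of _ 0]) (auto simp: dist_int_nonneg)
  show ?thesis
    using c0 cINF_lower[OF bdd] unfolding c_def by auto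
qed

definition ee :: "real \<Rightarrow> nat \<Rightarrow> real" where
  "ee \<alpha> x = real x * \<alpha> - of_int (round (real x * \<alpha>))"

lemma abs_ee: "\<bar>ee \<alpha> x\<bar> = dist_int (real x * \<alpha>)"
  by (simp add: ee_def dist_int_def)

lemma sep_aux:
  assumes hc: "\<forall>n::nat. n \<ge> 1 \<longrightarrow> c \<le> real n * dist_int (real n * \<alpha>)" and c: "c > 0"
    and xy: "y < x" "x < y + M"
  shows "c / real M < \<bar>ee \<alpha> x - ee \<alpha> y\<bar>"
proof -
  define n where "n = x - y"
  have n1: "n \<ge> 1" "n < M" using xy by (auto simp: n_def)
  have "c \<le> real n * dist_int (real n * \<alpha>)" using hc n1 by auto
  then have "c / real n \<le> dist_int (real n * \<alpha>)" using n1 by (simp add: field_simps)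
  moreover have "c / real M < c / real n" using n1 c by (simp add: frac_less2)
  moreover have "dist_int (real n * \<alpha>) \<le> \<bar>ee \<alpha> x - ee \<alpha> y\<bar>"
  proof -
    have "real n * \<alpha> - of_int (round (real x * \<alpha>) - round (real y * \<alpha>)) = ee \<alpha> x - ee \<alpha> y"
      using xy by (simp add: ee_def n_def of_nat_diff algebra_simps)
    then show ?thesis using dist_int_le[of "real n * \<alpha>" "round (real x * \<alpha>) - round (real y * \<alpha>)"] by simp
  qed
  ultimately show ?thesis by linarith
qed

lemma sep:
  assumes hc: "\<forall>n::nat. n \<ge> 1 \<longrightarrow> c \<le> real n * dist_int (real n * \<alpha>)" and c: "c > 0"
    and x: "x \<in> {2^k..<2^(k+1)}" and y: "y \<in> {2^k..<2^(k+1)}" and "x \<noteq> y"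
  shows "c / 2^k < \<bar>ee \<alpha> x - ee \<alpha> y\<bar>"
proof (cases "y < x")
  case True
  then show ?thesis using sep_aux[OF hc c True, of "2^k"] x y by auto
next
  case False
  then have "x < y" using assms by auto
  then show ?thesis using sep_aux[OF hc c \<open>x < y\<close>, of "2^k"] x y by (auto simp: abs_minus_commute)
qed

definition lev :: "real \<Rightarrow> nat \<Rightarrow> nat" where
  "lev \<alpha> x = nat \<lfloor>log 2 (1 / dist_int (real x * \<alpha>))\<rfloor>"

lemma lev_props:
  assumes hc: "\<forall>n::nat. n \<ge> 1 \<longrightarrow> c \<le> real n * dist_int (real n * \<alpha>)" and c: "c > 0"
    and x: "x \<ge> 1"
  shows "lev \<alpha> x \<ge> 1" "2 ^ lev \<alpha> x \<le> 1 / dist_int (real x * \<alpha>)"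
    "1 / dist_int (real x * \<alpha>) < 2 ^ (lev \<alpha> x + 1)" "dist_int (real x * \<alpha>) > 0"
proof -
  define d where "d = dist_int (real x * \<alpha>)"
  have "c \<le> real x * d" using hc x by (auto simp: d_def)
  moreover have "d \<ge> 0" by (simp add: d_def dist_int_nonneg)
  ultimately have d0: "d > 0" using c x by (cases "d = 0") auto
  have "d \<le> 1/2" using dist_int_le_half by (simp add: d_def)
  then have y2: "1 / d \<ge> 2" using d0 by (simp add: field_simps)
  define l where "l = \<lfloor>log 2 (1/d)\<rfloor>"
  have "log 2 (1/d) \<ge> 1" using y2 d0 by (subst le_log_iff) auto
  then have l1: "l \<ge> 1" by (simp add: l_def)
  have lv: "lev \<alpha> x = nat l" by (simp add: lev_def l_def d_def)
  have b: "2 powr l \<le> 1/d \<and> 1/d < 2 powr (l + 1)"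
    using floor_log_eq_powr_iff[of "1/d" 2 l] d0 by (simp add: l_def)
  have il: "real_of_int l = real (nat l)" using l1 by simp
  have e1: "2 powr (real_of_int l) = 2 ^ nat l" unfolding il by (simp add: powr_realpow)
  have il2: "real_of_int l + 1 = real (nat l + 1)" using l1 by simp
  have e2: "2 powr (real_of_int l + 1) = 2 ^ (nat l + 1)" unfolding il2 by (simp only: powr_realpow[of 2] zero_less_numeral)
  show "dist_int (real x * \<alpha>) > 0" using d0 d_def by simp
  show "lev \<alpha> x \<ge> 1" using l1 lv by simp
  show "2 ^ lev \<alpha> x \<le> 1 / dist_int (real x * \<alpha>)" using b e1 lv d_def by simp
  show "1 / dist_int (real x * \<alpha>) < 2 ^ (lev \<alpha> x + 1)" using b e2 lv d_def by simp
qed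
definition tt :: "real \<Rightarrow> real \<Rightarrow> nat \<Rightarrow> real" where
  "tt \<alpha> a x = 1 / (dist_int (\<alpha> * real x) * real x
        * (ln (1 / dist_int (real x * \<alpha>))) powr a * (ln (real x)) powr (2 - a))"

lemma tt_nonneg: "tt \<alpha> a x \<ge> 0"
  unfolding tt_def by (intro divide_nonneg_nonneg mult_nonneg_nonneg) (auto simp: dist_int_nonneg)

lemma term_bound:
  assumes hc: "\<forall>n::nat. n \<ge> 1 \<longrightarrow> c \<le> real n * dist_int (real n * \<alpha>)" and c: "c > 0"
    and a: "0 < a" "a < 1" and k: "k \<ge> 1" and x: "x \<in> {2^k..<2^(k+1)}"
  shows "tt \<alpha> a x \<le> 1 / ((1 / 2^(lev \<alpha> x + 1)) * 2^k * (real (lev \<alpha> x) * ln 2) powr a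
                          * (real k * ln 2) powr (2 - a))"
proof -
  define d where "d = dist_int (real x * \<alpha>)"
  define i where "i = lev \<alpha> x"
  have x1: "x \<ge> 1" using x by (auto intro: order.trans[OF one_le_power])
  note lp = lev_props[OF hc c x1, folded d_def i_def]
  have d0: "d > 0" using lp(4) .
  have dl: "1 / 2^(i+1) \<le> d" using lp(3) d0 by (simp add: field_simps)
  have Li: "real i * ln 2 \<le> ln (1 / d)"
  proof -
    have "ln ((2::real) ^ i) \<le> ln (1 / d)" using lp(2) d0 by (subst ln_le_cancel_iff) auto
    then show ?thesis by (simp add: ln_realpow)
  qed
  have i0: "real i * ln 2 > 0" using lp(1) by simp
  have xk: "(2::real)^k \<le> real x" using x
    by (metis atLeastLessThan_iff of_nat_le_iff of_nat_numeral of_nat_power)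
  have Mk: "real k * ln 2 \<le> ln (real x)"
  proof -
    have "ln ((2::real) ^ k) \<le> ln (real x)" using xk x1 by (subst ln_le_cancel_iff) auto
    then show ?thesis by (simp add: ln_realpow)
  qed
  have k0: "real k * ln 2 > 0" using k by simp
  have p1: "(real i * ln 2) powr a \<le> (ln (1 / d)) powr a"
    using Li i0 a by (intro powr_mono2) auto
  have p2: "(real k * ln 2) powr (2 - a) \<le> (ln (real x)) powr (2 - a)"
    using Mk k0 a by (intro powr_mono2) auto
  have pos: "0 < (1 / 2^(i+1)) * 2^k * (real i * ln 2) powr a * (real k * ln 2) powr (2 - a)"
    using i0 k0 lp(1) k by (intro mult_pos_pos) auto
  have m1: "(1 / 2^(i+1)) * 2^k \<le> d * real x"
    by (rule mult_mono) (use dl xk d0 in auto)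
  have m2: "(1 / 2^(i+1)) * 2^k * (real i * ln 2) powr a \<le> d * real x * (ln (1 / d)) powr a"
    by (rule mult_mono[OF m1 p1]) (use d0 x1 in auto)
  have m3: "(1 / 2^(i+1)) * 2^k * (real i * ln 2) powr a * (real k * ln 2) powr (2 - a)
        \<le> d * real x * (ln (1 / d)) powr a * (ln (real x)) powr (2 - a)"
    by (rule mult_mono[OF m2 p2]) (use d0 x1 in auto)
  have Dpos: "0 < d * real x * (ln (1 / d)) powr a * (ln (real x)) powr (2 - a)"
    using pos m3 by linarith
  have "1 / (d * real x * (ln (1 / d)) powr a * (ln (real x)) powr (2 - a))
     \<le> 1 / ((1 / 2^(i+1)) * 2^k * (real i * ln 2) powr a * (real k * ln 2) powr (2 - a))"
    apply (rule divide_left_mono[OF m3])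
     apply simp
    by (rule mult_pos_pos[OF Dpos pos])
  then show ?thesis unfolding tt_def d_def i_def by (simp add: mult.commute)
qed

lemma count_level:
  assumes hc: "\<forall>n::nat. n \<ge> 1 \<longrightarrow> c \<le> real n * dist_int (real n * \<alpha>)" and c: "c > 0"
  shows "real (card {x\<in>{2^k..<2^(k+1)}. lev \<alpha> x = i}) \<le> 2 * (2^k / (c * 2^(i+1)) + 1)"
proof -
  define A where "A = {x\<in>{2^k..<(2::nat)^(k+1)}. lev \<alpha> x = i}"
  define Ap where "Ap = {x\<in>A. ee \<alpha> x \<ge> 0}"
  define Am where "Am = {x\<in>A. ee \<alpha> x < 0}"
  have fin: "finite A" by (simp add: A_def)
  have AU: "A = Ap \<union> Am" "Ap \<inter> Am = {}" by (auto simp: Ap_def Am_def)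
  have cardA: "card A = card Ap + card Am"
    using fin AU by (simp add: card_Un_disjoint)
  have rng: "1 / 2^(i+1) < dist_int (real x * \<alpha>) \<and> dist_int (real x * \<alpha>) \<le> 1 / 2^(i+1) + 1 / 2^(i+1)"
    if "x \<in> A" for x
  proof -
    have x1: "x \<ge> 1" using that by (auto simp: A_def intro: order.trans[OF one_le_power])
    have li: "lev \<alpha> x = i" using that by (simp add: A_def)
    note lp = lev_props[OF hc c x1, unfolded li]
    have d0: "dist_int (real x * \<alpha>) > 0" using lp(4) .
    have "1 / 2^(i+1) < dist_int (real x * \<alpha>)" using lp(3) d0 by (simp add: field_simps)
    moreover have "dist_int (real x * \<alpha>) \<le> 1 / 2^i" using lp(2) d0 by (simp add: field_simps)
    moreover have "(1::real) / 2^i = 1 / 2^(i+1) + 1 / 2^(i+1)" by simp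
    ultimately show ?thesis by linarith
  qed
  have sepA: "c / 2^k < \<bar>ee \<alpha> x - ee \<alpha> y\<bar>" if "x \<in> A" "y \<in> A" "x \<noteq> y" for x y
    using sep[OF hc c] that by (auto simp: A_def)
  have dpos: "c / 2^k > 0" using c by simp
  have cp: "real (card Ap) \<le> (1 / 2^(i+1)) / (c / 2^k) + 1"
  proof (rule count_sep[where v = "ee \<alpha>" and lo = "1 / 2^(i+1)"])
    show "finite Ap" using fin by (simp add: Ap_def)
    show "0 < c / 2^k" by (rule dpos)
    show "0 \<le> 1 / (2::real)^(i+1)" by simp
    show "c / 2^k \<le> \<bar>ee \<alpha> x - ee \<alpha> y\<bar>" if "x \<in> Ap" "y \<in> Ap" "x \<noteq> y" for x y
      using sepA[of x y] that by (auto simp: Ap_def)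
    show "1 / 2^(i+1) < ee \<alpha> x \<and> ee \<alpha> x \<le> 1 / 2^(i+1) + 1 / 2^(i+1)" if "x \<in> Ap" for x
      using rng[of x] abs_ee[of \<alpha> x] that by (auto simp: Ap_def)
  qed
  have cm: "real (card Am) \<le> (1 / 2^(i+1)) / (c / 2^k) + 1"
  proof (rule count_sep[where v = "\<lambda>x. - ee \<alpha> x" and lo = "1 / 2^(i+1)"])
    show "finite Am" using fin by (simp add: Am_def)
    show "0 < c / 2^k" by (rule dpos)
    show "0 \<le> 1 / (2::real)^(i+1)" by simp
    show "c / 2^k \<le> \<bar>- ee \<alpha> x - - ee \<alpha> y\<bar>" if "x \<in> Am" "y \<in> Am" "x \<noteq> y" for x y
      using sepA[of x y] that by (auto simp: Am_def abs_minus_commute)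
    show "1 / 2^(i+1) < - ee \<alpha> x \<and> - ee \<alpha> x \<le> 1 / 2^(i+1) + 1 / 2^(i+1)" if "x \<in> Am" for x
      using rng[of x] abs_ee[of \<alpha> x] that by (auto simp: Am_def)
  qed
  have eq: "(1 / 2^(i+1)) / (c / 2^k) = (2::real)^k / (c * 2^(i+1))" by (simp add: field_simps)
  have "real (card A) = real (card Ap) + real (card Am)" using cardA by simp
  also have "\<dots> \<le> 2 * ((1 / 2^(i+1)) / (c / 2^k) + 1)" using add_mono[OF cp cm] by (simp only: mult_2)
  finally have "real (card A) \<le> 2 * (2^k / (c * 2^(i+1)) + 1)" unfolding eq .
  then show ?thesis unfolding A_def .
qed
definition KK :: "real \<Rightarrow> real \<Rightarrow> nat \<Rightarrow> real" where
  "KK a c r = (2/c + 2^(r+2)) * ln 2 powr (-a) * (1 + real r) powr (1-a) / ((1-a) * ln 2 powr (2-a))"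

lemma block_bound:
  assumes hc: "\<forall>n::nat. n \<ge> 1 \<longrightarrow> c \<le> real n * dist_int (real n * \<alpha>)" and c: "c > 0"
    and a: "0 < a" "a < 1" and r: "1 / c \<le> 2^r" and k: "k \<ge> 1"
  shows "(\<Sum>x\<in>{2^k..<2^(k+1)}. tt \<alpha> a x) \<le> KK a c r / real k"
proof -
  define B where "B = {(2::nat)^k..<2^(k+1)}"
  define A where "A i = {x\<in>B. lev \<alpha> x = i}" for i
  define Pk where "Pk = (real k * ln 2) powr (2 - a)"
  define U where "U i = 1 / ((1 / 2^(i+1)) * 2^k * (real i * ln 2) powr a * Pk)" for i :: nat
  define Q where "Q = 2/c + 2^(r+2)"
  have Pk0: "Pk > 0" using k by (simp add: Pk_def)
  have levr: "lev \<alpha> x \<in> {1..k+r}" if "x \<in> B" for x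
  proof -
    have x1: "x \<ge> 1" using that by (auto simp: B_def intro: order.trans[OF one_le_power])
    note lp = lev_props[OF hc c x1]
    define d where "d = dist_int (real x * \<alpha>)"
    have d0: "d > 0" using lp(4) by (simp add: d_def)
    have "c \<le> real x * d" using hc x1 by (auto simp: d_def)
    then have "1 / d \<le> real x / c" using d0 c by (simp add: field_simps)
    also have "real x / c < 2^(k+1) / c"
    proof -
      have "x < 2^(k+1)" using that by (simp add: B_def)
      then have "real x < 2^(k+1)" by (metis of_nat_less_iff of_nat_numeral of_nat_power)
      then show ?thesis using c by (simp add: divide_strict_right_mono)
    qed
    also have "2^(k+1) / c = 2^(k+1) * (1/c)" by simp
    also have "\<dots> \<le> 2^(k+1) * 2^r" using r by (intro mult_left_mono) auto
    also have "\<dots> = (2::real)^(k+1+r)" by (simp add: power_add)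
    finally have "(2::real) ^ lev \<alpha> x < 2 ^ (k+1+r)" using lp(2) unfolding d_def by linarith
    then have "lev \<alpha> x < k+1+r" by (rule power_less_imp_less_exp[rotated]) simp
    then show ?thesis using lp(1) by simp
  qed
  have finB: "finite B" by (simp add: B_def)
  have "(\<Sum>x\<in>B. tt \<alpha> a x) = (\<Sum>i\<in>{1..k+r}. \<Sum>x\<in>A i. tt \<alpha> a x)"
  proof -
    have "lev \<alpha> ` B \<subseteq> {1..k+r}" using levr by blast
    from sum.group[OF finB _ this, of "tt \<alpha> a"] show ?thesis unfolding A_def by simp
  qed
  also have "\<dots> \<le> (\<Sum>i\<in>{1..k+r}. \<Sum>x\<in>A i. U i)"
  proof (intro sum_mono)
    fix i x assume "x \<in> A i"
    then have "x \<in> B" "lev \<alpha> x = i" by (auto simp: A_def)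
    then show "tt \<alpha> a x \<le> U i" using term_bound[OF hc c a k, of x] unfolding U_def Pk_def B_def by simp
  qed
  also have "\<dots> = (\<Sum>i\<in>{1..k+r}. real (card (A i)) * U i)" by simp
  also have "\<dots> \<le> (\<Sum>i\<in>{1..k+r}. 2 * (2^k / (c * 2^(i+1)) + 1) * U i)"
  proof (intro sum_mono mult_right_mono)
    fix i show "real (card (A i)) \<le> 2 * (2^k / (c * 2^(i+1)) + 1)"
      using count_level[OF hc c, of k i] unfolding A_def B_def by simp
    have "(real i * ln 2) powr a \<ge> 0" by simp
    then show "0 \<le> U i" using Pk0 unfolding U_def by simp
  qed
  also have "\<dots> \<le> (\<Sum>i\<in>{1..k+r}. (Q * ln 2 powr (-a) / Pk) * real i powr (-a))"
  proof (intro sum_mono)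
    fix i assume i: "i \<in> {1..k+r}"
    have i0: "real i * ln 2 > 0" using i by simp
    have pa: "(real i * ln 2) powr a > 0" using i0 i by simp
    have e1: "2 * (2^k / (c * 2^(i+1)) + 1) * U i
        = (2/c + 2^(i+2)/2^k) / ((real i * ln 2) powr a * Pk)"
      unfolding U_def using c Pk0 i0 pa by (simp add: field_simps power_add)
    have "(2::real)^(i+2) \<le> 2^(k+r+2)" using i by (intro power_increasing) auto
    also have "\<dots> = 2^k * 2^(r+2)" by (simp add: power_add)
    finally have "(2::real)^(i+2)/2^k \<le> 2^(r+2)" by (simp add: field_simps)
    then have q: "2/c + 2^(i+2)/2^k \<le> Q" unfolding Q_def by simp
    have e2: "1 / ((real i * ln 2) powr a * Pk) = ln 2 powr (-a) / Pk * real i powr (-a)"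
      using i0 by (simp add: powr_mult powr_minus field_simps)
    have "(2/c + 2^(i+2)/2^k) / ((real i * ln 2) powr a * Pk)
        = (2/c + 2^(i+2)/2^k) * (ln 2 powr (-a) / Pk * real i powr (-a))"
      by (metis e2 times_divide_eq_right mult.right_neutral)
    also have "\<dots> \<le> Q * (ln 2 powr (-a) / Pk * real i powr (-a))"
      using q Pk0 by (intro mult_right_mono) auto
    finally show "2 * (2^k / (c * 2^(i+1)) + 1) * U i \<le> (Q * ln 2 powr (-a) / Pk) * real i powr (-a)"
      unfolding e1 by (simp add: mult.assoc)
  qed
  also have "\<dots> = (Q * ln 2 powr (-a) / Pk) * (\<Sum>i=1..k+r. real i powr (-a))"
    by (simp add: sum_distrib_left)
  also have "\<dots> \<le> (Q * ln 2 powr (-a) / Pk) * (real (k+r) powr (1-a) / (1-a))"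
    using sum_powr_neg[OF a, of "k+r"] Pk0 c unfolding Q_def by (intro mult_left_mono) auto
  also have "\<dots> \<le> (Q * ln 2 powr (-a) / Pk) * (((1 + real r) * real k) powr (1-a) / (1-a))"
  proof -
    have "real r * 1 \<le> real r * real k" using k by (intro mult_left_mono) auto
    then have "real (k+r) \<le> (1 + real r) * real k" by (simp add: algebra_simps)
    then have "real (k+r) powr (1-a) \<le> ((1 + real r) * real k) powr (1-a)"
      using a by (intro powr_mono2) auto
    then show ?thesis using a Pk0 c unfolding Q_def by (intro mult_left_mono divide_right_mono) auto
  qed
  also have "\<dots> = KK a c r / real k"
  proof -
    have k0: "real k > 0" using k by simp
    have e: "(1-a) - (2-a) = (-1::real)" by simp
    have "real k powr (1-a) / real k powr (2-a) = real k powr (-1)"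
      unfolding e[symmetric] by (rule powr_diff[symmetric])
    then have kk: "real k powr (1-a) / real k powr (2-a) = 1 / real k"
      using k0 by (simp add: powr_minus divide_inverse)
    have Pke: "Pk = real k powr (2-a) * ln 2 powr (2-a)" unfolding Pk_def using k0 by (simp add: powr_mult)
    then have "(Q * ln 2 powr (-a) / Pk) * (((1 + real r) * real k) powr (1-a) / (1-a))
        = KK a c r * (real k powr (1-a) / real k powr (2-a))"
    proof -
      have gen: "\<And>Q W Y Z R X b :: real. Q*W/(Y*Z) * (R*X/b) = Q*W*R/(b*Z) * (X/Y)"
        by (simp add: divide_inverse inverse_mult_distrib ac_simps)
      show ?thesis unfolding KK_def Q_def Pke using k0
        by (simp only: powr_mult[of "1 + real r" "real k"] of_nat_0_le_iff add_nonneg_nonneg zero_le_one gen)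
    qed
    then show ?thesis using kk by simp
  qed
  finally show ?thesis unfolding B_def .
qed
lemma dyadic_split:
  fixes f :: "nat \<Rightarrow> real"
  shows "(\<Sum>x\<in>{2^m..<2^(m+n)}. f x) = (\<Sum>k\<in>{m..<m+n}. \<Sum>x\<in>{2^k..<2^(k+1)}. f x)"
proof (induction n)
  case 0 then show ?case by simp
next
  case (Suc n)
  have le: "(2::nat)^m \<le> 2^(m+n)" "(2::nat)^(m+n) \<le> 2^(m + Suc n)" by (simp_all add: power_increasing)
  have "(\<Sum>x\<in>{2^m..<2^(m+Suc n)}. f x) = (\<Sum>x\<in>{2^m..<2^(m+n)}. f x) + (\<Sum>x\<in>{2^(m+n)..<2^(m+Suc n)}. f x)"
    using sum.atLeastLessThan_concat[OF le, of f] by simp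
  also have "\<dots> = (\<Sum>k\<in>{m..<m+Suc n}. \<Sum>x\<in>{2^k..<2^(k+1)}. f x)"
    using Suc by simp
  finally show ?case .
qed

lemma KK_pos: "0 < a \<Longrightarrow> a < 1 \<Longrightarrow> c > 0 \<Longrightarrow> KK a c r > 0"
  unfolding KK_def by (intro divide_pos_pos mult_pos_pos add_pos_pos) auto

theorem lemma3:
  fixes \<alpha> a :: real
  assumes "badly_approximable \<alpha>" and "0 < a" and "a < 1"
  shows "\<exists>C>0. \<forall>q::nat. q \<ge> 2 \<longrightarrow>
    (\<Sum>x=q..q^3. 1 / (dist_int (\<alpha> * real x) * real x
        * (ln (1 / dist_int (real x * \<alpha>))) powr a * (ln (real x)) powr (2 - a))) \<le> C"
proof -
  obtain c where c: "c > 0" and hc: "\<forall>n::nat. n \<ge> 1 \<longrightarrow> c \<le> real n * dist_int (real n * \<alpha>)"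
    using ba_const[OF assms(1)] by blast
  obtain r where r: "1 / c < 2^r" using real_arch_pow[of 2 "1/c"] by auto
  have a: "0 < a" "a < 1" using assms by auto
  define K where "K = KK a c r"
  have K0: "K > 0" unfolding K_def using KK_pos a c by simp
  have main: "(\<Sum>x=q..q^3. tt \<alpha> a x) \<le> 5 * K" if q: "q \<ge> 2" for q :: nat
  proof -
    obtain m where m: "2^m \<le> q" "q < 2^(m+1)" using ex_power_ivl1[of 2 q] q by auto
    have m1: "m \<ge> 1"
    proof (rule ccontr)
      assume "\<not> m \<ge> 1" then have "m = 0" by simp
      then show False using m q by simp
    qed
    have "q^3 < (2^(m+1))^3" using m(2) by (intro power_strict_mono) auto
    also have "\<dots> = 2^((m+1)*3)" by (simp only: power_mult)
    also have "(m+1)*3 = m + (2*m+3)" by simp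
    finally
    have q3: "q^3 < 2^(m + (2*m+3))" .
    have "(\<Sum>x=q..q^3. tt \<alpha> a x) \<le> (\<Sum>x\<in>{2^m..<2^(m + (2*m+3))}. tt \<alpha> a x)"
      by (rule sum_mono2) (use m q3 tt_nonneg in auto)
    also have "\<dots> = (\<Sum>k\<in>{m..<m+(2*m+3)}. \<Sum>x\<in>{2^k..<2^(k+1)}. tt \<alpha> a x)"
      by (rule dyadic_split)
    also have "\<dots> \<le> (\<Sum>k\<in>{m..<m+(2*m+3)}. K / real m)"
    proof (rule sum_mono)
      fix k assume k: "k \<in> {m..<m+(2*m+3)}"
      then have k1: "k \<ge> 1" using m1 by simp
      have "(\<Sum>x\<in>{2^k..<2^(k+1)}. tt \<alpha> a x) \<le> K / real k"
        unfolding K_def using block_bound[OF hc c a _ k1] r by simp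
      also have "\<dots> \<le> K / real m" using k m1 K0 by (intro divide_left_mono) auto
      finally show "(\<Sum>x\<in>{2^k..<2^(k+1)}. tt \<alpha> a x) \<le> K / real m" .
    qed
    also have "\<dots> = real (2*m+3) * K / real m" by simp
    also have "\<dots> \<le> 5 * K"
    proof -
      have "real (2*m+3) \<le> 5 * real m" using m1 by simp
      then have "real (2*m+3) * K \<le> 5 * real m * K" using K0 by (intro mult_right_mono) auto
      then show ?thesis using m1 by (simp add: field_simps)
    qed
    finally show ?thesis .
  qed
  show ?thesis
  proof (intro exI[of _ "5 * K"] conjI allI impI)
    show "5 * K > 0" using K0 by simp
    fix q :: nat assume "q \<ge> 2"
    from main[OF this] show "(\<Sum>x=q..q^3. 1 / (dist_int (\<alpha> * real x) * real x
        * (ln (1 / dist_int (real x * \<alpha>))) powr a * (ln (real x)) powr (2 - a))) \<le> 5 * K"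
      unfolding tt_def .
  qed
qed
end
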